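(* Let $h<0$ and $c_0=\min\{-1+\frac{h^2}{2},\,1\}$. For $c\in(-1,c_0)$ define $$T_\xi(c)=4\int_0^{\xi_1}\frac{d\xi}{\sqrt{\xi^4+2h\xi^2+2(c+1)}},\quad \xi_1^2=-h-\sqrt{h^2-2(c+1)},$$ $$T_\eta(c)=4\int_0^{\eta_1}\frac{d\eta}{\sqrt{-\eta^4+2h\eta^2-2(c-1)}},\quad \eta_1^2=h+\sqrt{h^2-2(c-1)}.$$ Then $$\lim_{c\to-1}\frac{T_\xi}{T_\eta}=\Big(1+\frac4{h^2}\Big)^{1/4}\frac{K(0)}{K\big(\frac{h+\sqrt{h^2+4}}{2\sqrt{h^2+4}}\big)}>1,$$ and $$\lim_{c\to c_0}\frac{T_\xi}{T_\eta}=\begin{cases}+\infty,& h\in[-2,0),\\[2pt] \Big(\frac{2h}{h-\sqrt{h^2-4}}\Big)^{1/2}\dfrac{K\Big(\frac{4}{(-h+\sqrt{h^2-4})^2}\Big)}{K(0)}, & h<-2.\end{cases}$$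
   Context: $K(m)=\int_0^1\frac{dt}{\sqrt{(1-t^2)(1-mt^2)}}$ is the complete elliptic integral of the first kind. $T_\xi,T_\eta$ are the periods, in regularized time, of the parabolic coordinates $\xi^2=r+x$, $\eta^2=r-x$ of solutions of the planar Stark problem $\ddot x=-x/r^3+1$, $\ddot y=-y/r^3$ with energy $h$ and constant $c$ (these lie on invariant tori for $c\in(-1,c_0)$). *)

theory Defs
  imports "HOL-Analysis.Analysis"
begin

text \<open>Complete elliptic integral of the first kind (improper at t = 1; taken as a
  Henstock--Kurzweil integral, which agrees with the absolutely convergent
  improper integral since the integrand is nonnegative).\<close>
definition ellK :: "real \<Rightarrow> real" where
  "ellK m = integral {0..1} (\<lambda>t. 1 / sqrt ((1 - t\<^sup>2) * (1 - m * t\<^sup>2)))"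

definition c0 :: "real \<Rightarrow> real" where
  "c0 h = min (-1 + h\<^sup>2 / 2) 1"

definition xi1 :: "real \<Rightarrow> real \<Rightarrow> real" where
  "xi1 h c = sqrt (- h - sqrt (h\<^sup>2 - 2 * (c + 1)))"

definition eta1 :: "real \<Rightarrow> real \<Rightarrow> real" where
  "eta1 h c = sqrt (h + sqrt (h\<^sup>2 - 2 * (c - 1)))"

definition Txi :: "real \<Rightarrow> real \<Rightarrow> real" where
  "Txi h c = 4 * integral {0..xi1 h c} (\<lambda>x. 1 / sqrt (x ^ 4 + 2 * h * x\<^sup>2 + 2 * (c + 1)))"

definition Teta :: "real \<Rightarrow> real \<Rightarrow> real" where
  "Teta h c = 4 * integral {0..eta1 h c} (\<lambda>y. 1 / sqrt (- (y ^ 4) + 2 * h * y\<^sup>2 - 2 * (c - 1)))"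

end

theory Submission
  imports Defs
begin


definition J :: "real \<Rightarrow> real \<Rightarrow> real" where
  "J A B = integral {0..pi/2} (\<lambda>t. 1 / sqrt (A + B * (sin t)\<^sup>2))"

lemma pos_comb:
  fixes A B s :: real
  assumes "A > 0" "A + B > 0" "0 \<le> s" "s \<le> 1"
  shows "A + B * s > 0"
proof -
  have "A + B * s = (1 - s) * A + s * (A + B)" by (simp add: algebra_simps)
  moreover have "(1 - s) * A \<ge> 0" using assms by simp
  moreover have "s * (A + B) \<ge> 0" using assms by simp
  moreover have "(1 - s) * A + s * (A + B) > 0"
    using assms by (cases "s = 1") (auto intro: add_pos_nonneg add_nonneg_pos)
  ultimately show ?thesis by simp
qed

lemma sin2_bounds: "0 \<le> (sin t)\<^sup>2" "(sin t)\<^sup>2 \<le> (1::real)"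
  by (simp_all add: abs_square_le_1)

lemma J_cont:
  "continuous_on {p :: real \<times> real. fst p > 0 \<and> fst p + snd p > 0} (\<lambda>p. J (fst p) (snd p))"
proof -
  let ?U = "{p :: real \<times> real. fst p > 0 \<and> fst p + snd p > 0}"
  have "continuous_on (?U \<times> cbox 0 (pi/2))
          (\<lambda>(p, t). 1 / sqrt (fst p + snd p * (sin t)\<^sup>2))"
  proof -
    have "sqrt (fst (fst x) + snd (fst x) * (sin (snd x))\<^sup>2) \<noteq> 0" if "x \<in> ?U \<times> cbox 0 (pi/2)" for x
    proof -
      have "fst (fst x) + snd (fst x) * (sin (snd x))\<^sup>2 > 0"
        using that by (intro pos_comb sin2_bounds) auto
      then show ?thesis by simp
    qed
    then show ?thesis unfolding case_prod_beta
      by (intro continuous_intros) auto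
  qed
  from integral_continuous_on_param[OF this]
  show ?thesis unfolding J_def by simp
qed



lemma J_integrand_cont:
  assumes "A > 0" "A + B > 0"
  shows "continuous_on S (\<lambda>t. 1 / sqrt (A + B * (sin t)\<^sup>2))"
proof -
  have "sqrt (A + B * (sin t)\<^sup>2) \<noteq> 0" for t
    using pos_comb[OF assms sin2_bounds, of t] by simp
  then show ?thesis by (intro continuous_intros) auto
qed

lemma key_subst:
  fixes P Q R :: real
  assumes P: "P > 0" and Q: "Q > 0" and QRP: "Q + R * P > 0"
  shows "integral {0..sqrt P} (\<lambda>x. 1 / sqrt ((P - x\<^sup>2) * (Q + R * x\<^sup>2))) = J Q (R * P)"
proof -
  define g where "g t = 1 / sqrt (Q + R * P * (sin t)\<^sup>2)" for t
  have gc: "continuous_on S g" for S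
    unfolding g_def using J_integrand_cont[of Q "R*P"] Q QRP by (simp add: mult.assoc)
  define F where "F x = integral {0..arcsin (x / sqrt P)} g" for x
  have sP: "sqrt P > 0" using P by simp
  have "((\<lambda>x. 1 / sqrt ((P - x\<^sup>2) * (Q + R * x\<^sup>2))) has_integral (F (sqrt P) - F 0)) {0..sqrt P}"
  proof (rule fundamental_theorem_of_calculus_interior)
    show "0 \<le> sqrt P" using sP by simp
    have c1: "continuous_on {0..pi/2} (\<lambda>u. integral {0..u} g)"
      by (intro indefinite_integral_continuous_1 integrable_continuous_real gc)
    have c2: "continuous_on {0..sqrt P} (\<lambda>x. arcsin (x / sqrt P))"
      using sP by (intro continuous_intros) (auto simp: field_simps)
    have im: "(\<lambda>x. arcsin (x / sqrt P)) ` {0..sqrt P} \<subseteq> {0..pi/2}"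
    proof
      fix y assume "y \<in> (\<lambda>x. arcsin (x / sqrt P)) ` {0..sqrt P}"
      then obtain x where x: "x \<in> {0..sqrt P}" "y = arcsin (x / sqrt P)" by auto
      have "0 \<le> x / sqrt P" "x / sqrt P \<le> 1" using x sP by (auto simp: field_simps)
      then show "y \<in> {0..pi/2}" using x arcsin_ubound[of "x / sqrt P"] arcsin_nonneg by auto
    qed
    show "continuous_on {0..sqrt P} F"
      unfolding F_def using continuous_on_compose2[OF c1 c2 im] by simp
  next
    fix x assume x: "x \<in> {0<..<sqrt P}"
    define y where "y = x / sqrt P"
    have y: "0 < y" "y < 1" using x sP by (auto simp: y_def field_simps)
    have ar: "0 < arcsin y" "arcsin y < pi/2"
      using y arcsin_less_arcsin[of 0 y] arcsin_less_arcsin[of y 1] by auto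
    have d1: "((\<lambda>u. integral {0..u} g) has_real_derivative g (arcsin y)) (at (arcsin y))"
      using integral_has_real_derivative[of 0 "pi/2" g "arcsin y"] gc ar
      by (simp add: at_within_Icc_at)
    have d2: "((\<lambda>x. arcsin (x / sqrt P)) has_real_derivative
                 inverse (sqrt (1 - y\<^sup>2)) * (1 / sqrt P)) (at x)"
      unfolding y_def
      by (rule DERIV_chain2[OF DERIV_arcsin]) (use y[unfolded y_def] P sP in \<open>auto intro!: derivative_eq_intros simp: field_simps\<close>)
    have d: "(F has_real_derivative g (arcsin y) * (inverse (sqrt (1 - y\<^sup>2)) * (1 / sqrt P))) (at x)"
      unfolding F_def using DERIV_chain2[OF d1[unfolded y_def] d2] by (simp add: y_def)
    have sa: "sin (arcsin y) = y" using y by (simp add: sin_arcsin)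
    have "g (arcsin y) * (inverse (sqrt (1 - y\<^sup>2)) * (1 / sqrt P))
          = 1 / sqrt ((P - x\<^sup>2) * (Q + R * x\<^sup>2))"
    proof -
      have e1: "Q + R * P * (sin (arcsin y))\<^sup>2 = Q + R * x\<^sup>2"
        using sa P by (simp add: y_def power_divide)
      have e2: "sqrt (1 - y\<^sup>2) * sqrt P = sqrt (P - x\<^sup>2)"
        using P by (simp add: y_def power_divide real_sqrt_mult[symmetric] field_simps)
      have "g (arcsin y) * (inverse (sqrt (1 - y\<^sup>2)) * (1 / sqrt P))
            = 1 / (sqrt (Q + R * x\<^sup>2) * (sqrt (1 - y\<^sup>2) * sqrt P))"
        unfolding g_def e1 by (simp add: field_simps)
      also have "\<dots> = 1 / sqrt ((P - x\<^sup>2) * (Q + R * x\<^sup>2))"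
        unfolding e2 by (simp add: real_sqrt_mult mult.commute)
      finally show ?thesis .
    qed
    with d show "(F has_vector_derivative 1 / sqrt ((P - x\<^sup>2) * (Q + R * x\<^sup>2))) (at x)"
      by (simp add: has_real_derivative_iff_has_vector_derivative)
  qed
  moreover have "F (sqrt P) - F 0 = J Q (R * P)"
    using sP by (simp add: F_def J_def g_def[abs_def] mult.assoc)
  ultimately show ?thesis by (simp add: integral_unique)
qed



lemma Txi_eq:
  fixes h c :: real
  assumes h: "h < 0" and c1: "-1 < c" and c2: "c < c0 h"
  shows "Txi h c = 4 * J (- h + sqrt (h\<^sup>2 - 2 * (c + 1))) (- (- h - sqrt (h\<^sup>2 - 2 * (c + 1))))"
proof -
  define r where "r = sqrt (h\<^sup>2 - 2 * (c + 1))"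
  have d: "h\<^sup>2 - 2 * (c + 1) > 0" using c2 by (simp add: c0_def)
  have r0: "r > 0" using d by (simp add: r_def)
  have rr: "r\<^sup>2 = h\<^sup>2 - 2 * (c + 1)" using d by (simp add: r_def)
  have "r < -h"
  proof -
    have "r\<^sup>2 < (-h)\<^sup>2" using rr c1 by simp
    then show ?thesis using h power_less_imp_less_base[of r 2 "-h"] by simp
  qed
  then have p: "- h - r > 0" by simp
  have "integral {0..sqrt (- h - r)} (\<lambda>x. 1 / sqrt ((- h - r - x\<^sup>2) * ((- h + r) + (-1) * x\<^sup>2)))
        = J (- h + r) ((-1) * (- h - r))"
    by (rule key_subst) (use p r0 in auto)
  moreover have "(\<lambda>x. 1 / sqrt (x ^ 4 + 2 * h * x\<^sup>2 + 2 * (c + 1)))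
      = (\<lambda>x. 1 / sqrt ((- h - r - x\<^sup>2) * ((- h + r) + (-1) * x\<^sup>2)))"
  proof
    fix x :: real
    have "x ^ 4 + 2 * h * x\<^sup>2 + 2 * (c + 1) = (- h - r - x\<^sup>2) * ((- h + r) + (-1) * x\<^sup>2)"
      using rr by (simp add: algebra_simps power2_eq_square power4_eq_xxxx)
    then show "1 / sqrt (x ^ 4 + 2 * h * x\<^sup>2 + 2 * (c + 1)) = 1 / sqrt ((- h - r - x\<^sup>2) * ((- h + r) + (-1) * x\<^sup>2))"
      by simp
  qed
  ultimately show ?thesis
    unfolding Txi_def xi1_def r_def[symmetric] by simp
qed

lemma Teta_eq:
  fixes h c :: real
  assumes h: "h < 0" and c1: "c < 1"
  shows "Teta h c = 4 * J (sqrt (h\<^sup>2 - 2 * (c - 1)) - h) (h + sqrt (h\<^sup>2 - 2 * (c - 1)))"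
proof -
  define R where "R = sqrt (h\<^sup>2 - 2 * (c - 1))"
  have d: "h\<^sup>2 - 2 * (c - 1) > 0" using c1 zero_le_power2[of h] by (smt (verit))
  have r0: "R > 0" using d by (simp add: R_def)
  have rr: "R\<^sup>2 = h\<^sup>2 - 2 * (c - 1)" using d by (simp add: R_def)
  have "-h < R"
  proof -
    have "(-h)\<^sup>2 < R\<^sup>2" using rr c1 by simp
    then show ?thesis using r0 power_less_imp_less_base[of "-h" 2 R] by simp
  qed
  then have p: "h + R > 0" by simp
  have "integral {0..sqrt (h + R)} (\<lambda>x. 1 / sqrt ((h + R - x\<^sup>2) * ((R - h) + 1 * x\<^sup>2)))
        = J (R - h) (1 * (h + R))"
    by (rule key_subst) (use p h r0 in auto)
  moreover have "(\<lambda>y. 1 / sqrt (- (y ^ 4) + 2 * h * y\<^sup>2 - 2 * (c - 1)))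
      = (\<lambda>x. 1 / sqrt ((h + R - x\<^sup>2) * ((R - h) + 1 * x\<^sup>2)))"
  proof
    fix x :: real
    have "- (x ^ 4) + 2 * h * x\<^sup>2 - 2 * (c - 1) = (h + R - x\<^sup>2) * ((R - h) + 1 * x\<^sup>2)"
      using rr by (simp add: algebra_simps power2_eq_square power4_eq_xxxx)
    then show "1 / sqrt (- (x ^ 4) + 2 * h * x\<^sup>2 - 2 * (c - 1)) = 1 / sqrt ((h + R - x\<^sup>2) * ((R - h) + 1 * x\<^sup>2))"
      by simp
  qed
  ultimately show ?thesis
    unfolding Teta_def eta1_def R_def[symmetric] by simp
qed

lemma ellK_eq:
  assumes "m < 1"
  shows "ellK m = J 1 (- m)"
proof -
  have "integral {0..sqrt 1} (\<lambda>x. 1 / sqrt ((1 - x\<^sup>2) * (1 + (-m) * x\<^sup>2))) = J 1 ((-m) * 1)"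
    by (rule key_subst) (use assms in auto)
  then show ?thesis by (simp add: ellK_def)
qed

lemma J_10: "J 1 0 = pi / 2"
  by (simp add: J_def)

lemma ellK0: "ellK 0 = pi / 2"
  using ellK_eq[of 0] J_10 by simp

lemma J_scale:
  assumes "A > 0"
  shows "J A B = J 1 (B / A) / sqrt A"
proof -
  have "(\<lambda>t. 1 / sqrt (A + B * (sin t)\<^sup>2)) = (\<lambda>t. (1 / sqrt A) * (1 / sqrt (1 + B / A * (sin t)\<^sup>2)))"
  proof
    fix t
    have "A + B * (sin t)\<^sup>2 = A * (1 + B / A * (sin t)\<^sup>2)" using assms by (simp add: field_simps)
    then show "1 / sqrt (A + B * (sin t)\<^sup>2) = (1 / sqrt A) * (1 / sqrt (1 + B / A * (sin t)\<^sup>2))"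
      by (simp add: real_sqrt_mult)
  qed
  then have "J A B = integral {0..pi/2} (\<lambda>t. (1 / sqrt A) * (1 / sqrt (1 + B / A * (sin t)\<^sup>2)))"
    unfolding J_def by simp
  also have "\<dots> = (1 / sqrt A) * J 1 (B / A)" unfolding J_def by (rule integral_mult_right)
  finally show ?thesis by simp
qed

lemma integral_reflect_pi2:
  fixes f :: "real \<Rightarrow> real"
  shows "integral {0..pi/2} (\<lambda>t. f (pi/2 - t)) = integral {0..pi/2} f"
proof -
  have "integral {-0..-(-(pi/2))} (\<lambda>x. (f \<circ> (+) (pi/2)) (-x)) = integral {-(pi/2)..0} (f \<circ> (+) (pi/2))"
    by (rule Henstock_Kurzweil_Integration.integral_reflect_real)
  also have "\<dots> = integral {-(pi/2) + pi/2..0 + pi/2} f"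
    by (rule integral_shift_Icc_real)
  finally show ?thesis by (simp add: o_def)
qed

lemma J_reflect: "J A B = J (A + B) (- B)"
proof -
  have "J (A + B) (- B) = integral {0..pi/2} (\<lambda>t. (\<lambda>t. 1 / sqrt (A + B * (sin t)\<^sup>2)) (pi/2 - t))"
  proof -
    have "A + B * (sin (pi/2 - t))\<^sup>2 = A + B + - B * (sin t)\<^sup>2" for t
    proof -
      have "sin (pi/2 - t) = cos t" by (simp add: sin_diff)
      then show ?thesis by (simp add: cos_squared_eq algebra_simps)
    qed
    then show ?thesis unfolding J_def by (simp only:)
  qed
  also have "\<dots> = J A B" unfolding J_def by (rule integral_reflect_pi2)
  finally show ?thesis by simp
qed

lemma J_le:
  assumes "A > 0" "B \<ge> 0"
  shows "J A B \<le> (pi/2) / sqrt A"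
proof -
  have "J A B \<le> integral {0..pi/2} (\<lambda>t. 1 / sqrt A)"
    unfolding J_def
  proof (rule integral_le)
    show "(\<lambda>t. 1 / sqrt (A + B * (sin t)\<^sup>2)) integrable_on {0..pi/2}"
      using assms by (intro integrable_continuous_real J_integrand_cont) auto
    fix t assume "t \<in> {0..pi/2}"
    have "A \<le> A + B * (sin t)\<^sup>2" using assms by simp
    moreover have "0 < A + B * (sin t)\<^sup>2" using assms by (simp add: add_pos_nonneg)
    ultimately show "1 / sqrt (A + B * (sin t)\<^sup>2) \<le> 1 / sqrt A"
      using assms by (intro divide_left_mono) (auto simp: mult_pos_pos)
  qed (intro integrable_continuous_real continuous_intros)
  then show ?thesis by simp
qed

lemma J_pos:
  assumes "A > 0" "A + B > 0"
  shows "J A B > 0"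
proof -
  have "0 < integral {0..pi/2} (\<lambda>t. 1 / sqrt (A + \<bar>B\<bar>))"
    using assms by simp
  also have "\<dots> \<le> J A B"
    unfolding J_def
  proof (rule integral_le)
    show "(\<lambda>t. 1 / sqrt (A + B * (sin t)\<^sup>2)) integrable_on {0..pi/2}"
      using assms by (intro integrable_continuous_real J_integrand_cont) auto
    fix t assume "t \<in> {0..pi/2}"
    have "B * (sin t)\<^sup>2 \<le> \<bar>B\<bar>"
    proof -
      have "B * (sin t)\<^sup>2 \<le> \<bar>B\<bar> * (sin t)\<^sup>2" by (simp add: mult_right_mono)
      also have "\<dots> \<le> \<bar>B\<bar> * 1" by (intro mult_left_mono sin2_bounds) auto
      finally show ?thesis by simp
    qed
    moreover have "0 < A + B * (sin t)\<^sup>2" using pos_comb[OF assms sin2_bounds] .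
    ultimately show "1 / sqrt (A + \<bar>B\<bar>) \<le> 1 / sqrt (A + B * (sin t)\<^sup>2)"
      by (intro divide_left_mono) (auto intro: mult_pos_pos)
  qed (intro integrable_continuous_real continuous_intros)
  finally show ?thesis .
qed



lemma J_div_lower:
  fixes r p H :: real
  assumes r: "r > 0" and p: "0 \<le> p" "p \<le> H" and H: "H > 0"
  shows "ln (1 + sqrt H * (pi/2) / sqrt (2*r)) / sqrt H \<le> J (p + 2*r) (-p)"
proof -
  define s where "s = sqrt (2*r)"
  have s: "s > 0" "s\<^sup>2 = 2*r" using r by (auto simp: s_def)
  define q where "q = sqrt H"
  have sH: "q > 0" "q\<^sup>2 = H" using H by (auto simp: q_def)
  define \<phi> where "\<phi> t = 1 / (s + q * (pi/2 - t))" for t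
  define \<Phi> where "\<Phi> t = - ln (s + q * (pi/2 - t)) / q" for t
  have pos: "s + q * (pi/2 - t) > 0" if "t \<le> pi/2" for t
    using s sH that by (intro add_pos_nonneg) auto
  have "(\<phi> has_integral (\<Phi> (pi/2) - \<Phi> 0)) {0..pi/2}"
  proof (rule fundamental_theorem_of_calculus)
    fix t :: real assume t: "t \<in> {0..pi/2}"
    define X where "X = s + q * (pi/2 - t)"
    have X: "X > 0" using pos[of t] t by (simp add: X_def)
    have "(\<Phi> has_real_derivative (- ((1 / X) * (- q)) / q)) (at t)"
      unfolding \<Phi>_def X_def
      using pos[of t] t sH
      by (auto intro!: derivative_eq_intros)
    moreover have "- ((1 / X) * (- q)) / q = \<phi> t" using sH X by (simp add: \<phi>_def X_def)
    ultimately have "(\<Phi> has_real_derivative \<phi> t) (at t)" by simp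
    then show "(\<Phi> has_vector_derivative \<phi> t) (at t within {0..pi/2})"
      by (simp add: has_real_derivative_iff_has_vector_derivative has_vector_derivative_at_within)
  qed simp
  moreover have "\<Phi> (pi/2) - \<Phi> 0 = ln (1 + q * (pi/2) / s) / q"
  proof -
    have "\<Phi> (pi/2) - \<Phi> 0 = (ln (s + q * (pi/2)) - ln s) / q"
      by (simp add: \<Phi>_def diff_divide_distrib)
    also have "ln (s + q * (pi/2)) - ln s = ln ((s + q * (pi/2)) / s)"
      using s pos[of 0] by (simp add: ln_div)
    also have "(s + q * (pi/2)) / s = 1 + q * (pi/2) / s"
      using s by (simp add: field_simps)
    finally show ?thesis .
  qed
  ultimately have I: "integral {0..pi/2} \<phi> = ln (1 + q * (pi/2) / s) / q"
    by (simp add: integral_unique)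
  have "integral {0..pi/2} \<phi> \<le> J (p + 2*r) (-p)"
    unfolding J_def
  proof (rule integral_le)
    show "\<phi> integrable_on {0..pi/2}" using \<open>(\<phi> has_integral _) _\<close> by blast
    show "(\<lambda>t. 1 / sqrt (p + 2 * r + - p * (sin t)\<^sup>2)) integrable_on {0..pi/2}"
      using r p by (intro integrable_continuous_real J_integrand_cont) auto
    fix t assume t: "t \<in> {0..pi/2}"
    have c0: "0 \<le> cos t" using t by (intro cos_ge_zero) auto
    have c1: "cos t \<le> pi/2 - t"
    proof -
      have "sin (pi/2 - t) = cos t" by (simp add: sin_diff)
      then show ?thesis using sin_x_le_x[of "pi/2 - t"] t by simp
    qed
    have cc: "(cos t)\<^sup>2 \<le> (pi/2 - t)\<^sup>2" using c0 c1 by (intro power_mono) auto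
    have e: "p + 2 * r + - p * (sin t)\<^sup>2 = 2 * r + p * (cos t)\<^sup>2"
      by (simp add: cos_squared_eq algebra_simps)
    have "2 * r + p * (cos t)\<^sup>2 \<le> 2 * r + H * (cos t)\<^sup>2"
      using p by (intro add_left_mono mult_right_mono) auto
    also have "\<dots> \<le> 2 * r + H * (pi/2 - t)\<^sup>2"
      using H cc by (intro add_left_mono mult_left_mono) auto
    also have "\<dots> \<le> (s + q * (pi/2 - t))\<^sup>2"
    proof -
      have "(s + q * (pi/2 - t))\<^sup>2 = s\<^sup>2 + (q)\<^sup>2 * (pi/2 - t)\<^sup>2 + 2 * s * q * (pi/2 - t)"
        by (simp add: power2_eq_square algebra_simps)
      moreover have "2 * s * q * (pi/2 - t) \<ge> 0" using s sH t by auto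
      ultimately show ?thesis using s sH by simp
    qed
    finally have le: "p + 2 * r + - p * (sin t)\<^sup>2 \<le> (s + q * (pi/2 - t))\<^sup>2" using e by simp
    have gt: "p + 2 * r + - p * (sin t)\<^sup>2 > 0"
    proof -
      have "0 \<le> p * (cos t)\<^sup>2" using p by simp
      then show ?thesis unfolding e using r by linarith
    qed
    have "sqrt (p + 2 * r + - p * (sin t)\<^sup>2) \<le> s + q * (pi/2 - t)"
      using le pos[of t] t real_sqrt_le_mono[OF le] by simp
    then show "\<phi> t \<le> 1 / sqrt (p + 2 * r + - p * (sin t)\<^sup>2)"
      unfolding \<phi>_def using gt pos[of t] t by (intro divide_left_mono mult_pos_pos) auto
  qed
  then show ?thesis using I by (simp add: s_def q_def)
qed



lemma J_tendsto:
  assumes A: "(A \<longlongrightarrow> a) F" and B: "(B \<longlongrightarrow> b) F" and a: "a > 0" and ab: "a + b > 0"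
  shows "((\<lambda>x. J (A x) (B x)) \<longlongrightarrow> J a b) F"
proof -
  have P: "((\<lambda>x. (A x, B x)) \<longlongrightarrow> (a, b)) F" using A B by (rule tendsto_Pair)
  have e1: "eventually (\<lambda>x. A x > 0) F" using order_tendstoD(1)[OF A a] .
  have e2: "eventually (\<lambda>x. A x + B x > 0) F" using order_tendstoD(1)[OF tendsto_add[OF A B] ab] .
  have "eventually (\<lambda>x. (A x, B x) \<in> {p :: real \<times> real. fst p > 0 \<and> fst p + snd p > 0}) F"
    using e1 e2 by eventually_elim auto
  from continuous_on_tendsto_compose[OF J_cont P _ this] a ab
  show ?thesis by simp
qed

lemma ratio_lim:
  fixes h :: real
  assumes ev: "eventually (\<lambda>c. Txi h c = 4 * J (A1 c) (B1 c) \<and> Teta h c = 4 * J (A2 c) (B2 c)) F"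
    and t1: "(A1 \<longlongrightarrow> a1) F" "(B1 \<longlongrightarrow> b1) F" and t2: "(A2 \<longlongrightarrow> a2) F" "(B2 \<longlongrightarrow> b2) F"
    and p1: "a1 > 0" "a1 + b1 > 0" and p2: "a2 > 0" "a2 + b2 > 0"
  shows "((\<lambda>c. Txi h c / Teta h c) \<longlongrightarrow> J a1 b1 / J a2 b2) F"
proof -
  have "((\<lambda>c. (4 * J (A1 c) (B1 c)) / (4 * J (A2 c) (B2 c))) \<longlongrightarrow> (4 * J a1 b1) / (4 * J a2 b2)) F"
    using J_pos[OF p2]
    by (intro tendsto_divide tendsto_mult tendsto_const J_tendsto[OF t1 p1] J_tendsto[OF t2 p2]) auto
  then have "((\<lambda>c. (4 * J (A1 c) (B1 c)) / (4 * J (A2 c) (B2 c))) \<longlongrightarrow> J a1 b1 / J a2 b2) F"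
    by simp
  moreover have "eventually (\<lambda>c. (4 * J (A1 c) (B1 c)) / (4 * J (A2 c) (B2 c)) = Txi h c / Teta h c) F"
    using ev by eventually_elim simp
  ultimately show ?thesis by (rule Lim_transform_eventually)
qed

lemma c0_gt: "h < (0::real) \<Longrightarrow> c0 h > -1"
  by (simp add: c0_def)

lemma c0_le1: "c0 h \<le> 1"
  by (simp add: c0_def)

lemma eqs_on:
  fixes h c :: real
  assumes "h < 0" "-1 < c" "c < c0 h"
  shows "Txi h c = 4 * J (- h + sqrt (h\<^sup>2 - 2 * (c + 1))) (- (- h - sqrt (h\<^sup>2 - 2 * (c + 1))))
       \<and> Teta h c = 4 * J (sqrt (h\<^sup>2 - 2 * (c - 1)) - h) (h + sqrt (h\<^sup>2 - 2 * (c - 1)))"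
  using Txi_eq[OF assms] Teta_eq[of h c] assms c0_le1[of h] by auto

lemma frac_rearr:
  fixes a b c d :: real
  assumes "b > 0" "c > 0" "d > 0"
  shows "(a / b) / (c / d) = d / b * a / c"
  using assms by (simp add: field_simps)

lemma part1:
  fixes h :: real
  assumes h: "h < 0"
  shows "((\<lambda>c. Txi h c / Teta h c) \<longlongrightarrow>
            (1 + 4 / h\<^sup>2) powr (1/4) * ellK 0
              / ellK ((h + sqrt (h\<^sup>2 + 4)) / (2 * sqrt (h\<^sup>2 + 4)))) (at_right (-1))
       \<and> (1 + 4 / h\<^sup>2) powr (1/4) * ellK 0
              / ellK ((h + sqrt (h\<^sup>2 + 4)) / (2 * sqrt (h\<^sup>2 + 4))) > 1"
proof -
  define s where "s = sqrt (h\<^sup>2 + 4)"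
  have h4: "h\<^sup>2 + 4 > 0" by (smt (verit) zero_le_power2)
  have s: "s > 0" "s\<^sup>2 = h\<^sup>2 + 4" using h4 by (auto simp: s_def)
  have sh: "-h < s"
    using power_less_imp_less_base[of "-h" 2 s] s by simp
  have sqh: "sqrt (h\<^sup>2) = - h" using h by simp
  have ev: "eventually (\<lambda>c. Txi h c = 4 * J (- h + sqrt (h\<^sup>2 - 2 * (c + 1))) (- (- h - sqrt (h\<^sup>2 - 2 * (c + 1))))
       \<and> Teta h c = 4 * J (sqrt (h\<^sup>2 - 2 * (c - 1)) - h) (h + sqrt (h\<^sup>2 - 2 * (c - 1)))) (at_right (-1))"
    using eventually_at_right_real[OF c0_gt[OF h]] by eventually_elim (use eqs_on h in auto)
  have l1: "((\<lambda>c. - h + sqrt (h\<^sup>2 - 2 * (c + 1))) \<longlongrightarrow> - 2 * h) (at_right (-1))"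
  proof -
    have "((\<lambda>c. - h + sqrt (h\<^sup>2 - 2 * (c + 1))) \<longlongrightarrow> - h + sqrt (h\<^sup>2 - 2 * (-1 + 1))) (at_right (-1))"
      by (intro tendsto_intros)
    then show ?thesis using sqh by simp
  qed
  have l2: "((\<lambda>c. - (- h - sqrt (h\<^sup>2 - 2 * (c + 1)))) \<longlongrightarrow> 0) (at_right (-1))"
  proof -
    have "((\<lambda>c. - (- h - sqrt (h\<^sup>2 - 2 * (c + 1)))) \<longlongrightarrow> - (- h - sqrt (h\<^sup>2 - 2 * (-1 + 1)))) (at_right (-1))"
      by (intro tendsto_intros)
    then show ?thesis using sqh by simp
  qed
  have l3: "((\<lambda>c. sqrt (h\<^sup>2 - 2 * (c - 1)) - h) \<longlongrightarrow> s - h) (at_right (-1))"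
  proof -
    have "((\<lambda>c. sqrt (h\<^sup>2 - 2 * (c - 1)) - h) \<longlongrightarrow> sqrt (h\<^sup>2 - 2 * (-1 - 1)) - h) (at_right (-1))"
      by (intro tendsto_intros)
    then show ?thesis by (simp add: s_def)
  qed
  have l4: "((\<lambda>c. h + sqrt (h\<^sup>2 - 2 * (c - 1))) \<longlongrightarrow> h + s) (at_right (-1))"
  proof -
    have "((\<lambda>c. h + sqrt (h\<^sup>2 - 2 * (c - 1))) \<longlongrightarrow> h + sqrt (h\<^sup>2 - 2 * (-1 - 1))) (at_right (-1))"
      by (intro tendsto_intros)
    then show ?thesis by (simp add: s_def)
  qed
  have lim: "((\<lambda>c. Txi h c / Teta h c) \<longlongrightarrow> J (-2*h) 0 / J (s - h) (h + s)) (at_right (-1))"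
    by (rule ratio_lim[OF ev l1 l2 l3 l4]) (use h sh s in auto)
  define k where "k = (h + s) / (2 * s)"
  have k1: "k < 1" using s h by (simp add: k_def field_simps)
  have Jk: "J (s - h) (h + s) = ellK k / sqrt (2 * s)"
  proof -
    have "J (s - h) (h + s) = J (2 * s) (- (h + s))" using J_reflect[of "s - h" "h + s"] by simp
    also have "\<dots> = J 1 (- (h + s) / (2 * s)) / sqrt (2 * s)" using J_scale[of "2 * s" "- (h + s)"] s by simp
    also have "J 1 (- (h + s) / (2 * s)) = ellK k" by (metis ellK_eq[OF k1] k_def minus_divide_left)
    finally show ?thesis .
  qed
  have J0: "J (-2*h) 0 = (pi/2) / sqrt (-2*h)" using J_scale[of "-2*h" 0] h J_10 by simp
  have Ekpos: "ellK k > 0"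
  proof -
    have "J (s - h) (h + s) > 0" using s sh h by (intro J_pos) auto
    then show ?thesis using Jk s by (simp add: zero_less_divide_iff)
  qed
  define W where "W = sqrt (2 * s) / sqrt (-2*h)"
  have W: "(1 + 4 / h\<^sup>2) powr (1/4) = W"
  proof -
    define x where "x = s / (-h)"
    have x: "x > 0" using s h by (simp add: x_def divide_pos_neg)
    have "1 + 4 / h\<^sup>2 = x\<^sup>2" using s h by (simp add: x_def power_divide add_divide_distrib)
    also have "\<dots> = x powr 2" by (rule powr_numeral[symmetric]) (use x in simp)
    finally have "(1 + 4 / h\<^sup>2) powr (1/4) = x powr (1/2)" by (simp add: powr_powr)
    also have "\<dots> = sqrt x" using x by (simp add: powr_half_sqrt)
    also have "x = (2 * s) / (-2 * h)" by (simp add: x_def)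
    also have "sqrt \<dots> = W" unfolding W_def by (rule real_sqrt_divide)
    finally show ?thesis .
  qed
  have target: "J (-2*h) 0 / J (s - h) (h + s) = (1 + 4 / h\<^sup>2) powr (1/4) * ellK 0 / ellK k"
    unfolding J0 Jk ellK0 W W_def using s h Ekpos by (intro frac_rearr) auto
  have gt: "(1 + 4 / h\<^sup>2) powr (1/4) * ellK 0 / ellK k > 1"
  proof -
    have "J (s - h) (h + s) \<le> (pi/2) / sqrt (s - h)" using s sh h by (intro J_le) auto
    also have "\<dots> < (pi/2) / sqrt (-2*h)" using sh h by (intro divide_strict_left_mono) auto
    finally have "J (s - h) (h + s) < J (-2*h) 0" using J0 by simp
    moreover have "J (s - h) (h + s) > 0" using s sh h by (intro J_pos) auto
    ultimately have "J (-2*h) 0 / J (s - h) (h + s) > 1" by simp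
    then show ?thesis using target by simp
  qed
  have kk: "(h + sqrt (h\<^sup>2 + 4)) / (2 * sqrt (h\<^sup>2 + 4)) = k" unfolding k_def s_def ..
  show ?thesis unfolding kk using lim[unfolded target] gt by blast
qed



lemma part4:
  fixes h :: real
  assumes h: "h < -2"
  shows "((\<lambda>c. Txi h c / Teta h c) \<longlongrightarrow>
            (2 * h / (h - sqrt (h\<^sup>2 - 4))) powr (1/2)
              * ellK (4 / (- h + sqrt (h\<^sup>2 - 4))\<^sup>2) / ellK 0) (at_left (c0 h))"
proof -
  have h0: "h < 0" using h by simp
  have hh: "h\<^sup>2 > 4"
  proof -
    have "2\<^sup>2 < (-h)\<^sup>2" using h by (intro power_strict_mono) auto
    then show ?thesis by simp
  qed
  have c01: "c0 h = 1" using hh by (simp add: c0_def)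
  define r where "r = sqrt (h\<^sup>2 - 4)"
  have r: "r > 0" "r\<^sup>2 = h\<^sup>2 - 4" using hh by (auto simp: r_def)
  have rh: "r < -h"
    using power_less_imp_less_base[of r 2 "-h"] r h by simp
  have sqh: "sqrt (h\<^sup>2) = - h" using h by simp
  have ev: "eventually (\<lambda>c. Txi h c = 4 * J (- h + sqrt (h\<^sup>2 - 2 * (c + 1))) (- (- h - sqrt (h\<^sup>2 - 2 * (c + 1))))
       \<and> Teta h c = 4 * J (sqrt (h\<^sup>2 - 2 * (c - 1)) - h) (h + sqrt (h\<^sup>2 - 2 * (c - 1)))) (at_left 1)"
    using eventually_at_left_real[of "-1" 1, simplified] by eventually_elim (use eqs_on h0 c01 in auto)
  have l1: "((\<lambda>c. - h + sqrt (h\<^sup>2 - 2 * (c + 1))) \<longlongrightarrow> - h + r) (at_left 1)"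
  proof -
    have "((\<lambda>c. - h + sqrt (h\<^sup>2 - 2 * (c + 1))) \<longlongrightarrow> - h + sqrt (h\<^sup>2 - 2 * (1 + 1))) (at_left 1)"
      by (intro tendsto_intros)
    then show ?thesis by (simp add: r_def)
  qed
  have l2: "((\<lambda>c. - (- h - sqrt (h\<^sup>2 - 2 * (c + 1)))) \<longlongrightarrow> - (- h - r)) (at_left 1)"
  proof -
    have "((\<lambda>c. - (- h - sqrt (h\<^sup>2 - 2 * (c + 1)))) \<longlongrightarrow> - (- h - sqrt (h\<^sup>2 - 2 * (1 + 1)))) (at_left 1)"
      by (intro tendsto_intros)
    then show ?thesis by (simp add: r_def)
  qed
  have l3: "((\<lambda>c. sqrt (h\<^sup>2 - 2 * (c - 1)) - h) \<longlongrightarrow> -2 * h) (at_left 1)"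
  proof -
    have "((\<lambda>c. sqrt (h\<^sup>2 - 2 * (c - 1)) - h) \<longlongrightarrow> sqrt (h\<^sup>2 - 2 * (1 - 1)) - h) (at_left 1)"
      by (intro tendsto_intros)
    then show ?thesis using sqh by simp
  qed
  have l4: "((\<lambda>c. h + sqrt (h\<^sup>2 - 2 * (c - 1))) \<longlongrightarrow> 0) (at_left 1)"
  proof -
    have "((\<lambda>c. h + sqrt (h\<^sup>2 - 2 * (c - 1))) \<longlongrightarrow> h + sqrt (h\<^sup>2 - 2 * (1 - 1))) (at_left 1)"
      by (intro tendsto_intros)
    then show ?thesis using sqh by simp
  qed
  have lim: "((\<lambda>c. Txi h c / Teta h c) \<longlongrightarrow> J (- h + r) (- (- h - r)) / J (-2*h) 0) (at_left 1)"
    by (rule ratio_lim[OF ev l1 l2 l3 l4]) (use h r rh in auto)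
  define q where "q = - h + r"
  define p where "p = - h - r"
  have q: "q > 0" using r h by (simp add: q_def)
  have pq: "p * q = 4" using r by (simp add: p_def q_def algebra_simps power2_eq_square)
  define m where "m = 4 / q\<^sup>2"
  have mpq: "m = p / q" using pq q by (simp add: m_def power2_eq_square field_simps)
  have pltq: "p < q" using r by (simp add: p_def q_def)
  have m1: "m < 1" unfolding mpq using pltq q by simp
  have J1: "J (- h + r) (- (- h - r)) = ellK m / sqrt q"
  proof -
    have "J (- h + r) (- (- h - r)) = J q (- p)" unfolding p_def q_def ..
    also have "\<dots> = J 1 (- p / q) / sqrt q" by (rule J_scale) (use q in simp)
    also have "- p / q = - m" unfolding mpq by (rule minus_divide_left[symmetric])
    also have "J 1 (- m) = ellK m" by (rule ellK_eq[OF m1, symmetric])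
    finally show ?thesis .
  qed
  have J0: "J (-2*h) 0 = (pi/2) / sqrt (-2*h)" using J_scale[of "-2*h" 0] h J_10 by simp
  have Empos: "ellK m > 0"
  proof -
    have "J (- h + r) (- (- h - r)) > 0" using r h by (intro J_pos) auto
    then show ?thesis using J1 q by (simp add: zero_less_divide_iff)
  qed
  have P: "(2 * h / (h - sqrt (h\<^sup>2 - 4))) powr (1/2) = sqrt (-2 * h) / sqrt q"
  proof -
    have hq: "h - sqrt (h\<^sup>2 - 4) = - q" by (simp add: q_def r_def)
    have eq: "2 * h / (h - sqrt (h\<^sup>2 - 4)) = (-2 * h) / q"
      unfolding hq by simp
    have nn: "(-2 * h) / q \<ge> 0" using q h by (intro divide_nonneg_pos) auto
    show ?thesis by (simp only: eq powr_half_sqrt[OF nn] real_sqrt_divide)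
  qed
  have target: "J (- h + r) (- (- h - r)) / J (-2*h) 0
       = (2 * h / (h - sqrt (h\<^sup>2 - 4))) powr (1/2) * ellK m / ellK 0"
    unfolding P J1 J0 ellK0 using q h by (intro frac_rearr) auto
  have mm: "4 / (- h + sqrt (h\<^sup>2 - 4))\<^sup>2 = m" unfolding m_def q_def r_def ..
  show ?thesis unfolding c01 mm using lim[unfolded target] .
qed



lemma part3:
  fixes h :: real
  assumes h: "h < 0" and h2: "-2 \<le> h"
  shows "filterlim (\<lambda>c. Txi h c / Teta h c) at_top (at_left (c0 h))"
proof -
  define C where "C = c0 h"
  have hh: "h\<^sup>2 \<le> 4"
  proof -
    have "(-h)\<^sup>2 \<le> 2\<^sup>2" using h h2 by (intro power_mono) auto
    then show ?thesis by simp
  qed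
  have CC: "C = -1 + h\<^sup>2 / 2" using hh by (simp add: C_def c0_def)
  have C1: "C > -1" using c0_gt[OF h] by (simp add: C_def)
  have ev0: "eventually (\<lambda>c. c \<in> {-1<..<C}) (at_left C)"
    by (rule eventually_at_left_real[OF C1])
  have ev: "eventually (\<lambda>c. Txi h c = 4 * J (- h + sqrt (h\<^sup>2 - 2 * (c + 1))) (- (- h - sqrt (h\<^sup>2 - 2 * (c + 1))))
       \<and> Teta h c = 4 * J (sqrt (h\<^sup>2 - 2 * (c - 1)) - h) (h + sqrt (h\<^sup>2 - 2 * (c - 1)))) (at_left C)"
    using ev0 by eventually_elim (use eqs_on h C_def in auto)
  have s4: "sqrt (h\<^sup>2 - 2 * (C - 1)) = 2"
  proof -
    have "h\<^sup>2 - 2 * (C - 1) = 2\<^sup>2" unfolding CC by simp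
    then show ?thesis by (simp only: real_sqrt_abs abs_numeral)
  qed
  have l3: "((\<lambda>c. sqrt (h\<^sup>2 - 2 * (c - 1)) - h) \<longlongrightarrow> 2 - h) (at_left C)"
  proof -
    have "((\<lambda>c. sqrt (h\<^sup>2 - 2 * (c - 1)) - h) \<longlongrightarrow> sqrt (h\<^sup>2 - 2 * (C - 1)) - h) (at_left C)"
      by (intro tendsto_intros)
    then show ?thesis unfolding s4 .
  qed
  have l4: "((\<lambda>c. h + sqrt (h\<^sup>2 - 2 * (c - 1))) \<longlongrightarrow> h + 2) (at_left C)"
  proof -
    have "((\<lambda>c. h + sqrt (h\<^sup>2 - 2 * (c - 1))) \<longlongrightarrow> h + sqrt (h\<^sup>2 - 2 * (C - 1))) (at_left C)"
      by (intro tendsto_intros)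
    then show ?thesis unfolding s4 .
  qed
  define L where "L = 4 * J (2 - h) (h + 2)"
  have Lpos: "L > 0" unfolding L_def using h by (intro mult_pos_pos J_pos) auto
  have TL: "((\<lambda>c. Teta h c) \<longlongrightarrow> L) (at_left C)"
  proof -
    have "((\<lambda>c. 4 * J (sqrt (h\<^sup>2 - 2 * (c - 1)) - h) (h + sqrt (h\<^sup>2 - 2 * (c - 1)))) \<longlongrightarrow> L) (at_left C)"
      unfolding L_def using h by (intro tendsto_mult tendsto_const J_tendsto[OF l3 l4]) auto
    moreover have "eventually (\<lambda>c. 4 * J (sqrt (h\<^sup>2 - 2 * (c - 1)) - h) (h + sqrt (h\<^sup>2 - 2 * (c - 1))) = Teta h c) (at_left C)"
      using ev by eventually_elim simp
    ultimately show ?thesis by (rule Lim_transform_eventually)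
  qed
  define u where "u c = sqrt (2 * sqrt (h\<^sup>2 - 2 * (c + 1)))" for c
  define K where "K = sqrt (-h) * (pi/2)"
  have Kpos: "K > 0" using h by (simp add: K_def)
  have u0: "(u \<longlongrightarrow> 0) (at_left C)"
  proof -
    have "(u \<longlongrightarrow> sqrt (2 * sqrt (h\<^sup>2 - 2 * (C + 1)))) (at_left C)"
      unfolding u_def by (intro tendsto_intros)
    moreover have "h\<^sup>2 - 2 * (C + 1) = 0" unfolding CC by simp
    ultimately show ?thesis by (simp only: real_sqrt_zero mult_zero_right)
  qed
  have rpos: "h\<^sup>2 - 2 * (c + 1) > 0" if "c < C" for c
    using that unfolding CC by simp
  have upos: "eventually (\<lambda>c. 0 < u c) (at_left C)"
    using ev0 by eventually_elim (use rpos in \<open>auto simp: u_def\<close>)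
  have G1: "filterlim (\<lambda>c. inverse (u c)) at_top (at_left C)"
    by (rule filterlim_inverse_at_top[OF u0 upos])
  have G2: "filterlim (\<lambda>c. 1 + K * inverse (u c)) at_top (at_left C)"
    by (rule filterlim_tendsto_add_at_top[OF tendsto_const filterlim_tendsto_pos_mult_at_top[OF tendsto_const Kpos G1]])
  have G3: "filterlim (\<lambda>c. ln (1 + K * inverse (u c))) at_top (at_left C)"
    by (rule filterlim_compose[OF ln_at_top G2])
  have c4: "4 / sqrt (-h) > 0" using h by simp
  have G4: "filterlim (\<lambda>c. 4 / sqrt (-h) * ln (1 + K * inverse (u c))) at_top (at_left C)"
    by (rule filterlim_tendsto_pos_mult_at_top[OF tendsto_const c4 G3])
  have bound: "eventually (\<lambda>c. 4 / sqrt (-h) * ln (1 + K * inverse (u c)) \<le> Txi h c) (at_left C)"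
    using ev0
  proof eventually_elim
    case (elim c)
    define r where "r = sqrt (h\<^sup>2 - 2 * (c + 1))"
    have r0: "r > 0" using rpos[of c] elim by (simp add: r_def)
    have rr: "r\<^sup>2 = h\<^sup>2 - 2 * (c + 1)" using rpos[of c] elim by (simp add: r_def)
    have "r < -h"
    proof -
      have "r\<^sup>2 < (-h)\<^sup>2" using rr elim by simp
      then show ?thesis using h power_less_imp_less_base[of r 2 "-h"] by simp
    qed
    then have pp: "0 \<le> - h - r" by simp
    have B: "ln (1 + sqrt (-h) * (pi/2) / sqrt (2*r)) / sqrt (-h) \<le> J ((- h - r) + 2*r) (- (- h - r))"
      by (rule J_div_lower) (use r0 pp h in auto)
    have e1: "(- h - r) + 2*r = - h + r" by simp
    have e2: "sqrt (-h) * (pi/2) / sqrt (2*r) = K * inverse (u c)"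
      unfolding K_def u_def r_def[symmetric] by (rule divide_inverse)
    have T: "Txi h c = 4 * J (- h + r) (- (- h - r))"
      using Txi_eq[of h c] h elim by (simp add: C_def r_def)
    have "4 / sqrt (-h) * ln (1 + K * inverse (u c)) = 4 * (ln (1 + sqrt (-h) * (pi/2) / sqrt (2*r)) / sqrt (-h))"
      unfolding e2 by simp
    also have "\<dots> \<le> 4 * J ((- h - r) + 2*r) (- (- h - r))" using B by simp
    also have "\<dots> = Txi h c" unfolding e1 T ..
    finally show ?case .
  qed
  have TX: "filterlim (\<lambda>c. Txi h c) at_top (at_left C)"
    by (rule filterlim_at_top_mono[OF G4 bound])
  have "filterlim (\<lambda>c. inverse (Teta h c) * Txi h c) at_top (at_left C)"
    by (rule filterlim_tendsto_pos_mult_at_top[OF tendsto_inverse[OF TL] _ TX]) (use Lpos in auto)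
  moreover have "(\<lambda>c. Txi h c / Teta h c) = (\<lambda>c. inverse (Teta h c) * Txi h c)"
    by (rule ext) (simp add: divide_inverse mult.commute)
  ultimately show ?thesis by (simp add: C_def)
qed

theorem proposition4p2:
  fixes h :: real
  assumes "h < 0"
  shows "((\<lambda>c. Txi h c / Teta h c) \<longlongrightarrow>
            (1 + 4 / h\<^sup>2) powr (1/4) * ellK 0
              / ellK ((h + sqrt (h\<^sup>2 + 4)) / (2 * sqrt (h\<^sup>2 + 4)))) (at_right (-1))
       \<and> (1 + 4 / h\<^sup>2) powr (1/4) * ellK 0
              / ellK ((h + sqrt (h\<^sup>2 + 4)) / (2 * sqrt (h\<^sup>2 + 4))) > 1
       \<and> (-2 \<le> h \<longrightarrow> filterlim (\<lambda>c. Txi h c / Teta h c) at_top (at_left (c0 h)))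
       \<and> (h < -2 \<longrightarrow> ((\<lambda>c. Txi h c / Teta h c) \<longlongrightarrow>
            (2 * h / (h - sqrt (h\<^sup>2 - 4))) powr (1/2)
              * ellK (4 / (- h + sqrt (h\<^sup>2 - 4))\<^sup>2) / ellK 0) (at_left (c0 h)))"
  using part1[OF assms] part3[OF assms] part4 by blast

end
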